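(* Every $1$-Sperner hypergraph ${\cal H}=(V,{\cal E})$ with $V\neq\emptyset$ is $1$-decomposable, that is, it is the gluing of two $1$-Sperner hypergraphs.
   Context: A hypergraph ${\cal H}=(V,{\cal E})$ consists of a finite vertex set $V$ and a set ${\cal E}$ of subsets of $V$. It is $1$-Sperner if every two distinct hyperedges $e,f$ satisfy $\min\{|e\setminus f|,|f\setminus e|\}=1$. Given vertex-disjoint hypergraphs ${\cal H}_1=(V_1,{\cal E}_1)$, ${\cal H}_2=(V_2,{\cal E}_2)$ and a new vertex $z\notin V_1\cup V_2$, the gluing ${\cal H}_1\odot{\cal H}_2$ has vertex set $V_1\cup V_2\cup\{z\}$ and hyperedge set $\{\{z\}\cup e: e\in{\cal E}_1\}\cup\{V_1\cup e: e\in{\cal E}_2\}$. ${\cal H}$ is $z$-decomposable for a vertex $z$ if for all hyperedges $e,f$ with $z\in e\setminus f$ we have $e\setminus\{z\}\subseteq f$ (equivalently ${\cal H}$ is a gluing with new vertex $z$), and $1$-decomposable if it is $z$-decomposable for some vertex $z$. *)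

theory Defs
  imports Main
begin

definition hypergraph :: "'a set \<Rightarrow> 'a set set \<Rightarrow> bool" where
  "hypergraph V E \<longleftrightarrow> finite V \<and> E \<subseteq> Pow V"

definition one_sperner :: "'a set set \<Rightarrow> bool" where
  "one_sperner E \<longleftrightarrow>
     (\<forall>e\<in>E. \<forall>f\<in>E. e \<noteq> f \<longrightarrow> min (card (e - f)) (card (f - e)) = 1)"

definition gluing :: "'a set \<Rightarrow> 'a set set \<Rightarrow> 'a set \<Rightarrow> 'a set set \<Rightarrow> 'a \<Rightarrow> 'a set \<times> 'a set set" where
  "gluing V1 E1 V2 E2 z =
     (V1 \<union> V2 \<union> {z}, {insert z e | e. e \<in> E1} \<union> {V1 \<union> e | e. e \<in> E2})"

definition z_decomposable :: "'a set set \<Rightarrow> 'a \<Rightarrow> bool" where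
  "z_decomposable E z \<longleftrightarrow> (\<forall>e\<in>E. \<forall>f\<in>E. z \<in> e - f \<longrightarrow> e - {z} \<subseteq> f)"

definition one_decomposable :: "'a set \<Rightarrow> 'a set set \<Rightarrow> bool" where
  "one_decomposable V E \<longleftrightarrow> (\<exists>z\<in>V. z_decomposable E z)"

end

theory Submission
  imports Defs
begin

lemma key_card:
  assumes "finite m" "finite g" "card m \<le> card g" "min (card (m-g)) (card (g-m)) = 1"
  shows "card (m - g) = 1"
proof -
  have a: "card (m-g) = card m - card (m \<inter> g)" using assms(1) by (simp add: card_Diff_subset_Int)
  have b: "card (g-m) = card g - card (m \<inter> g)" using assms(2) by (simp add: card_Diff_subset_Int Int_commute)
  have c: "card (m \<inter> g) \<le> card m" using assms(1) by (simp add: card_mono)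
  show ?thesis using a b c assms(3,4) by linarith
qed

lemma card_ge2:
  assumes "finite A" "x \<in> A" "y \<in> A" "x \<noteq> y"
  shows "2 \<le> card A"
proof -
  have "{x,y} \<subseteq> A" using assms by auto
  hence "card {x,y} \<le> card A" using assms(1) card_mono by blast
  thus ?thesis using assms(4) by simp
qed

lemma exists_good:
  assumes hg: "hypergraph V E" and sp: "one_sperner E" and ne: "V \<noteq> {}"
  shows "\<exists>z\<in>V. z_decomposable E z"
proof -
  have finV: "finite V" and EV: "E \<subseteq> Pow V" using hg by (auto simp: hypergraph_def)
  have fin: "\<And>e. e \<in> E \<Longrightarrow> finite e" using finV EV finite_subset by blast
  have spr: "\<And>e f. e \<in> E \<Longrightarrow> f \<in> E \<Longrightarrow> e \<noteq> f \<Longrightarrow> min (card (e - f)) (card (f - e)) = 1"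
    using sp by (auto simp: one_sperner_def)
  show ?thesis
  proof (cases "E = {}")
    case True
    then show ?thesis using ne by (auto simp: z_decomposable_def)
  next
    case False
    then obtain m0 where "m0 \<in> E" by blast
    then obtain m where mE: "m \<in> E" and mmin: "\<forall>g. g \<in> E \<longrightarrow> card m \<le> card g"
      using ex_has_least_nat[of "\<lambda>g. g \<in> E" m0 card] by blast
    show ?thesis
    proof (cases "E - {m} = {}")
      case True
      hence "E = {m}" using mE by blast
      then show ?thesis using ne by (auto simp: z_decomposable_def)
    next
      case False
      then obtain g0 where "g0 \<in> E - {m}" by blast
      moreover have "\<forall>y. y \<in> E - {m} \<longrightarrow> card (y - m) < card V + 1"
      proof (intro allI impI)
        fix y assume "y \<in> E - {m}"
        hence "y - m \<subseteq> V" using EV by auto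
        hence "card (y - m) \<le> card V" using finV card_mono by blast
        thus "card (y - m) < card V + 1" by simp
      qed
      ultimately obtain f0 where f0E: "f0 \<in> E - {m}"
        and f0max: "\<forall>y. y \<in> E - {m} \<longrightarrow> card (y - m) \<le> card (f0 - m)"
        using ex_has_greatest_nat[of "\<lambda>g. g \<in> E - {m}" g0 "\<lambda>g. card (g - m)" "card V + 1"] by blast
      have A: "\<And>g. g \<in> E \<Longrightarrow> g \<noteq> m \<Longrightarrow> card (m - g) = 1"
        using key_card fin mE mmin spr by metis
      obtain z where mf0: "m - f0 = {z}" using A[of f0] f0E card_1_singletonE by blast
      have zV: "z \<in> V" using mf0 mE EV by blast
      have zm: "z \<in> m" "z \<notin> f0" using mf0 by auto
      have "z_decomposable E z"
        unfolding z_decomposable_def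
      proof (intro ballI impI)
        fix e f assume eE: "e \<in> E" and fE: "f \<in> E" and zef: "z \<in> e - f"
        have fm: "f \<noteq> m" using zef zm by auto
        obtain z' where "m - f = {z'}" using A[OF fE fm] card_1_singletonE by blast
        moreover have "z \<in> m - f" using zef zm by auto
        ultimately have "m - f = {z}" by auto
        hence mf: "m - {z} \<subseteq> f" by auto
        have mf0': "m - {z} \<subseteq> f0" using mf0 by auto
        show "e - {z} \<subseteq> f"
        proof (cases "e = m")
          case True then show ?thesis using mf by simp
        next
          case em: False
          obtain y where me: "m - e = {y}" using A[OF eE em] card_1_singletonE by blast
          have yz: "y \<noteq> z" "y \<in> m" "y \<notin> e" using me zef by auto
          have yf0: "y \<in> f0" using yz mf0 by auto
          have yf: "y \<in> f" using yz mf by auto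
          have ef0: "e \<noteq> f0" using zef zm by auto
          have sub1: "e - m \<subseteq> f0"
          proof
            fix x assume xe: "x \<in> e - m"
            show "x \<in> f0"
            proof (rule ccontr)
              assume xf0: "x \<notin> f0"
              have "2 \<le> card (e - f0)"
                using card_ge2[of "e - f0" z x] fin[OF eE] xe xf0 zef zm by auto
              hence c1: "card (f0 - e) = 1" using spr[OF eE _ ef0] f0E by auto
              obtain w where "f0 - e = {w}" using c1 card_1_singletonE by blast
              hence f0e: "f0 - e = {y}" using yf0 yz by auto
              have "f0 - m \<subset> e - m"
              proof
                show "f0 - m \<subseteq> e - m" using f0e yz by auto
                show "f0 - m \<noteq> e - m" using xe xf0 by auto
              qed
              hence "card (f0 - m) < card (e - m)"
                using fin[OF eE] psubset_card_mono by (metis finite_Diff)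
              moreover have "card (e - m) \<le> card (f0 - m)" using f0max eE em by auto
              ultimately show False by simp
            qed
          qed
          show ?thesis
          proof
            fix x assume xe: "x \<in> e - {z}"
            show "x \<in> f"
            proof (cases "x \<in> m")
              case True then show ?thesis using mf xe by auto
            next
              case xm: False
              have xf0: "x \<in> f0" using sub1 xe xm by auto
              show ?thesis
              proof (rule ccontr)
                assume xf: "x \<notin> f"
                have ef: "e \<noteq> f" using zef by auto
                have "2 \<le> card (e - f)"
                  using card_ge2[of "e - f" z x] fin[OF eE] xe xf zef by auto
                hence c1: "card (f - e) = 1" using spr[OF eE fE ef] by auto
                obtain w where "f - e = {w}" using c1 card_1_singletonE by blast
                hence fe: "f - e = {y}" using yf yz by auto
                have "f \<subseteq> f0"
                proof
                  fix w assume wf: "w \<in> f"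
                  show "w \<in> f0"
                  proof (cases "w = y")
                    case True then show ?thesis using yf0 by simp
                  next
                    case False
                    hence we: "w \<in> e" using fe wf by auto
                    show ?thesis
                    proof (cases "w \<in> m")
                      case True
                      have "w \<noteq> z" using wf zef by auto
                      then show ?thesis using True mf0' by auto
                    next
                      case False then show ?thesis using sub1 we by auto
                    qed
                  qed
                qed
                hence "f - f0 = {}" by blast
                hence "card (f - f0) = 0" by (metis card.empty)
                moreover have "f \<noteq> f0" using xf xf0 by auto
                ultimately show False using spr[OF fE _] f0E by fastforce
              qed
            qed
          qed
        qed
      qed
      then show ?thesis using zV by blast
    qed
  qed
qed


lemma glue:
  assumes hg: "hypergraph V E" and sp: "one_sperner E" and zV: "z \<in> V"
    and zd: "z_decomposable E z"
  shows "\<exists>z V1 E1 V2 E2. hypergraph V1 E1 \<and> hypergraph V2 E2 \<and> V1 \<inter> V2 = {} \<and>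
            z \<notin> V1 \<union> V2 \<and> one_sperner E1 \<and> one_sperner E2 \<and>
            (V, E) = gluing V1 E1 V2 E2 z"
proof -
  have finV: "finite V" and EV: "E \<subseteq> Pow V" using hg by (auto simp: hypergraph_def)
  have zd': "\<And>e f. e \<in> E \<Longrightarrow> f \<in> E \<Longrightarrow> z \<in> e \<Longrightarrow> z \<notin> f \<Longrightarrow> e - {z} \<subseteq> f"
    using zd by (auto simp: z_decomposable_def)
  define V1 where "V1 = (\<Union>{e - {z} | e. e \<in> E \<and> z \<in> e})"
  define E1 where "E1 = {e - {z} | e. e \<in> E \<and> z \<in> e}"
  define V2 where "V2 = V - V1 - {z}"
  define E2 where "E2 = {f - V1 | f. f \<in> E \<and> z \<notin> f}"
  have V1V: "V1 \<subseteq> V" using EV unfolding V1_def by blast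
  have zV1: "z \<notin> V1" unfolding V1_def by blast
  have V1f: "\<And>f. f \<in> E \<Longrightarrow> z \<notin> f \<Longrightarrow> V1 \<subseteq> f"
    unfolding V1_def using zd' by blast
  have "finite V1" using finV V1V finite_subset by blast
  moreover have "E1 \<subseteq> Pow V1" unfolding E1_def V1_def by blast
  ultimately have h1: "hypergraph V1 E1" unfolding hypergraph_def by blast
  have h2: "hypergraph V2 E2" unfolding hypergraph_def E2_def V2_def
    using finV EV by auto
  have sp1: "one_sperner E1" unfolding one_sperner_def E1_def
  proof (clarify)
    fix e f assume a: "e \<in> E" "z \<in> e" "f \<in> E" "z \<in> f" "e - {z} \<noteq> f - {z}"
    have "e \<noteq> f" using a by auto
    moreover have "e - {z} - (f - {z}) = e - f" "f - {z} - (e - {z}) = f - e" using a by auto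
    ultimately show "min (card (e - {z} - (f - {z}))) (card (f - {z} - (e - {z}))) = 1"
      using sp a unfolding one_sperner_def by auto
  qed
  have sp2: "one_sperner E2" unfolding one_sperner_def E2_def
  proof (clarify)
    fix e f assume a: "e \<in> E" "z \<notin> e" "f \<in> E" "z \<notin> f" "e - V1 \<noteq> f - V1"
    have "e \<noteq> f" using a by auto
    moreover have "e - V1 - (f - V1) = e - f" "f - V1 - (e - V1) = f - e"
      using a V1f[of e] V1f[of f] by auto
    ultimately show "min (card (e - V1 - (f - V1))) (card (f - V1 - (e - V1))) = 1"
      using sp a unfolding one_sperner_def by auto
  qed
  have eqV: "V = V1 \<union> V2 \<union> {z}" using V1V zV unfolding V2_def by auto
  have eqE: "E = {insert z e | e. e \<in> E1} \<union> {V1 \<union> e | e. e \<in> E2}"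
  proof
    show "E \<subseteq> {insert z e | e. e \<in> E1} \<union> {V1 \<union> e | e. e \<in> E2}"
    proof
      fix e assume eE: "e \<in> E"
      show "e \<in> {insert z e | e. e \<in> E1} \<union> {V1 \<union> e | e. e \<in> E2}"
      proof (cases "z \<in> e")
        case True
        hence "e = insert z (e - {z})" by auto
        moreover have "e - {z} \<in> E1" using eE True unfolding E1_def by blast
        ultimately show ?thesis by blast
      next
        case False
        hence "e = V1 \<union> (e - V1)" using V1f[OF eE] by auto
        moreover have "e - V1 \<in> E2" using eE False unfolding E2_def by blast
        ultimately show ?thesis by blast
      qed
    qed
    show "{insert z e | e. e \<in> E1} \<union> {V1 \<union> e | e. e \<in> E2} \<subseteq> E"
    proof
      fix x assume "x \<in> {insert z e | e. e \<in> E1} \<union> {V1 \<union> e | e. e \<in> E2}"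
      then show "x \<in> E"
      proof
        assume "x \<in> {insert z e | e. e \<in> E1}"
        then obtain e where "e \<in> E" "z \<in> e" "x = insert z (e - {z})" unfolding E1_def by blast
        then show ?thesis by (simp add: insert_absorb)
      next
        assume "x \<in> {V1 \<union> e | e. e \<in> E2}"
        then obtain f where "f \<in> E" "z \<notin> f" "x = V1 \<union> (f - V1)" unfolding E2_def by blast
        moreover have "V1 \<union> (f - V1) = f" using V1f calculation by auto
        ultimately show ?thesis by simp
      qed
    qed
  qed
  have "V1 \<inter> V2 = {}" "z \<notin> V1 \<union> V2" using zV1 unfolding V2_def by auto
  then show ?thesis using h1 h2 sp1 sp2 eqV eqE unfolding gluing_def by blast
qed

theorem theorem9:
  fixes V :: "'a set" and E :: "'a set set"
  assumes "hypergraph V E" and "one_sperner E" and "V \<noteq> {}"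
  shows "one_decomposable V E \<and>
         (\<exists>z V1 E1 V2 E2. hypergraph V1 E1 \<and> hypergraph V2 E2 \<and> V1 \<inter> V2 = {} \<and>
            z \<notin> V1 \<union> V2 \<and> one_sperner E1 \<and> one_sperner E2 \<and>
            (V, E) = gluing V1 E1 V2 E2 z)"
proof -
  obtain z where "z \<in> V" "z_decomposable E z" using exists_good assms by blast
  then show ?thesis using glue[OF assms(1,2)] by (auto simp: one_decomposable_def)
qed

end
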